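(* Let $t\ge2$ be an integer and let $p\in\mathcal{P}_1\cup\mathcal{P}_2\cup\mathcal{P}_3\cup\mathcal{P}_4$. Then for every integer $m$ with $\chi_t(mp)\ne0$, $$\chi_t(mp)=\begin{cases}\chi_t(m),& p\in\mathcal{P}_1\cup\mathcal{P}_2,\\ -\chi_t(m),& p\in\mathcal{P}_3\cup\mathcal{P}_4.\end{cases}$$
   Context: $\chi_t$ is the function of period $3\cdot2^{t+1}$ with $\chi_t(n)=1$ if $n\equiv 2^{t+1}-3$ or $3+2^{t+2}$, $\chi_t(n)=-1$ if $n\equiv 2^{t+1}+3$ or $2^{t+2}-3\pmod{3\cdot2^{t+1}}$, and $0$ otherwise. $\mathcal{P}_1$ is the set of primes $p\equiv1\pmod{3\cdot2^{t+1}}$; $\mathcal{P}_2$ the set of primes $p\equiv3\cdot2^{t+1}-1\pmod{3\cdot2^{t+1}}$; $\mathcal{P}_3$ the set of primes $p\equiv r_1(t)\pmod{3\cdot2^{t+1}}$ where $r_1(t)=2^{t+1}-1$ if $t$ is even and $2^{t+1}+1$ if $t$ is odd; $\mathcal{P}_4$ the set of primes $p\equiv r_2(t)\pmod{3\cdot2^{t+1}}$ where $r_2(t)=2^{t+2}+1$ if $t$ is even and $2^{t+2}-1$ if $t$ is odd. *)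

theory Defs
  imports Main "HOL-Computational_Algebra.Primes"
begin

definition modulus :: "nat \<Rightarrow> int" where
  "modulus t = 3 * 2 ^ (t + 1)"

definition chi :: "nat \<Rightarrow> int \<Rightarrow> int" where
  "chi t n =
     (let M = modulus t; r = n mod M in
      if r = (2 ^ (t+1) - 3) mod M \<or> r = (3 + 2 ^ (t+2)) mod M then 1
      else if r = (2 ^ (t+1) + 3) mod M \<or> r = (2 ^ (t+2) - 3) mod M then -1
      else 0)"

definition r1 :: "nat \<Rightarrow> int" where
  "r1 t = (if even t then 2 ^ (t+1) - 1 else 2 ^ (t+1) + 1)"

definition r2 :: "nat \<Rightarrow> int" where
  "r2 t = (if even t then 2 ^ (t+2) + 1 else 2 ^ (t+2) - 1)"

definition P1 :: "nat \<Rightarrow> int set" where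
  "P1 t = {p. prime p \<and> 0 < p \<and> p mod modulus t = (1) mod modulus t}"

definition P2 :: "nat \<Rightarrow> int set" where
  "P2 t = {p. prime p \<and> 0 < p \<and> p mod modulus t = (modulus t - 1) mod modulus t}"

definition P3 :: "nat \<Rightarrow> int set" where
  "P3 t = {p. prime p \<and> 0 < p \<and> p mod modulus t = (r1 t) mod modulus t}"

definition P4 :: "nat \<Rightarrow> int set" where
  "P4 t = {p. prime p \<and> 0 < p \<and> p mod modulus t = (r2 t) mod modulus t}"

end

theory Submission
  imports Defs
begin

lemma crt3:
  fixes x y N :: int
  assumes "coprime 3 N"
  shows "(x mod (3*N) = y mod (3*N)) \<longleftrightarrow> (x mod N = y mod N \<and> x mod 3 = y mod 3)"
  using assms by (auto simp add: mod_eq_dvd_iff intro: divides_mult dest: dvd_mult_left dvd_mult_right)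

lemma N_facts:
  assumes "t \<ge> 2"
  shows "(2::int)^(t+1) \<ge> 8" "coprime 3 ((2::int)^(t+1))" "(2::int)^(t+1) mod 3 \<noteq> 0"
proof -
  have "(2::int)^3 \<le> 2^(t+1)" by (rule power_increasing) (use assms in auto)
  then show "(2::int)^(t+1) \<ge> 8" by simp
  show c: "coprime 3 ((2::int)^(t+1))" by (simp add: coprime_power_right_iff)
  show "(2::int)^(t+1) mod 3 \<noteq> 0"
  proof
    assume "(2::int)^(t+1) mod 3 = 0"
    then have "(3::int) dvd 2^(t+1)" by auto
    with c have "is_unit (3::int)" by (meson coprime_absorb_left)
    then show False by simp
  qed
qed

lemma chi_char:
  assumes "t \<ge> 2"
  defines "N \<equiv> (2::int)^(t+1)"
  shows "chi t x = (if x mod N = N - 3 then 1 else if x mod N = 3 then -1 else 0) *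
     (if x mod 3 = N mod 3 then 1 else if x mod 3 = (2*N) mod 3 then -1 else (0::int))"
proof -
  have N8: "N \<ge> 8" and cop: "coprime 3 N" and N3: "N mod 3 \<noteq> 0"
    using N_facts[OF assms(1)] unfolding N_def by auto
  have M: "modulus t = 3 * N" by (simp add: modulus_def N_def)
  have e1: "2^(t+1) - 3 = N - 3" "3 + 2^(t+2) = 2*N + 3" "2^(t+1) + 3 = N + 3"
     "2^(t+2) - 3 = 2*N - 3" by (simp_all add: N_def)
  have a1: "(N-3) mod N = N - 3" using N8 by (intro mod_pos_pos_trivial) auto
  have "(2*N-3) mod N = ((N-3) + N) mod N" by (simp add: algebra_simps)
  also have "\<dots> = (N - 3) mod N" by (rule mod_add_self2)
  also have "\<dots> = N - 3" by (rule a1)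
  finally have a2: "(2*N-3) mod N = N - 3" .
  have m1: "(N-3) mod N = N - 3" "(2*N+3) mod N = 3" "(N+3) mod N = 3" "(2*N-3) mod N = N - 3"
    using N8 a1 a2 by (simp_all add: mod_pos_pos_trivial)
  have m3: "(N-3) mod 3 = N mod 3" "(2*N+3) mod 3 = (2*N) mod 3" "(N+3) mod 3 = N mod 3"
     "(2*N-3) mod 3 = (2*N) mod 3" by (simp_all add: mod_diff_right_eq[symmetric] mod_add_right_eq[symmetric])
  have d: "N mod 3 \<noteq> (2*N) mod 3" using N3 by presburger

  have "N - 3 \<noteq> 3" using N8 by simp
  show ?thesis
    unfolding chi_def Let_def M e1 mod_mod_trivial crt3[OF cop] m1 m3
    using d \<open>N - 3 \<noteq> 3\<close> by auto
qed


definition sN :: "int \<Rightarrow> int \<Rightarrow> int" where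
  "sN N x = (if x mod N = N - 3 then 1 else if x mod N = 3 then -1 else 0)"
definition c3 :: "int \<Rightarrow> int \<Rightarrow> int" where
  "c3 N x = (if x mod 3 = N mod 3 then 1 else if x mod 3 = (2*N) mod 3 then -1 else 0)"

lemma chi_sc: "t \<ge> 2 \<Longrightarrow> chi t x = sN (2^(t+1)) x * c3 (2^(t+1)) x"
  unfolding sN_def c3_def by (rule chi_char)

lemma sN_pos: assumes "p mod N = 1" shows "sN N (m*p) = sN N m"
proof -
  have "(m*p) mod N = m mod N" by (metis assms mod_mult_right_eq mult.right_neutral)
  then show ?thesis unfolding sN_def by simp
qed

lemma sN_neg:
  assumes "N \<ge> 8" "p mod N = N - 1"
  shows "sN N (m*p) = - sN N m"
proof -
  have "p mod N = (-1) mod N" using assms by (simp add: zmod_zminus1_eq_if)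
  then have e: "(m*p) mod N = (-m) mod N" by (metis mod_mult_right_eq mult_minus1_right)
  have r: "0 \<le> m mod N" "m mod N < N" using assms by auto
  have g: "\<And>u. 0 \<le> u \<Longrightarrow> u < N \<Longrightarrow> (if (if u = 0 then 0 else N - u) = N - 3 then 1 else if (if u = 0 then 0 else N - u) = 3 then -1 else 0)
     = - (if u = N - 3 then 1 else if u = 3 then -1 else (0::int))" using assms(1) by auto
  show ?thesis unfolding sN_def e zmod_zminus1_eq_if using g[OF r] by simp
qed

lemma c3_pos: assumes "p mod 3 = 1" shows "c3 N (m*p) = c3 N m"
proof -
  have "(m*p) mod 3 = m mod 3" by (metis assms mod_mult_right_eq mult.right_neutral)
  then show ?thesis unfolding c3_def by simp
qed

lemma c3_neg:
  assumes "N mod 3 \<noteq> 0" "p mod 3 = 2"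
  shows "c3 N (m*p) = - c3 N m"
proof -
  have "p mod 3 = (-1) mod 3" using assms by simp
  then have e: "(m*p) mod 3 = (-m) mod 3" by (metis mod_mult_right_eq mult_minus1_right)
  have n: "N mod 3 = 1 \<or> N mod 3 = 2" using assms(1) by presburger
  have m: "m mod 3 = 0 \<or> m mod 3 = 1 \<or> m mod 3 = 2" by presburger
  have nn: "(2*N) mod 3 = (2 * (N mod 3)) mod 3" by (simp add: mod_mult_right_eq)
  have mm: "(-m) mod 3 = (- (m mod 3)) mod 3" by (simp add: mod_minus_eq)
  show ?thesis unfolding c3_def e nn mm using n m by auto
qed

lemma pow2_mod3: "(2::int)^k mod 3 = (if even k then 1 else 2)"
proof (induction k)
  case 0 then show ?case by simp
next
  case (Suc k)
  have "(2::int)^Suc k mod 3 = (2 * (2^k mod 3)) mod 3" by (simp add: mod_mult_right_eq)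
  then show ?case using Suc by (cases "even k") simp_all
qed

theorem lemma4p6:
  fixes t :: nat and p m :: int
  assumes "t \<ge> 2"
    and "p \<in> P1 t \<union> P2 t \<union> P3 t \<union> P4 t"
    and "chi t (m * p) \<noteq> 0"
  shows "chi t (m * p) = (if p \<in> P1 t \<union> P2 t then chi t m else - chi t m)"
proof -
  define N where "N = (2::int)^(t+1)"
  have N8: "N \<ge> 8" and cop: "coprime 3 N" and N3: "N mod 3 \<noteq> 0"
    using N_facts[OF assms(1)] unfolding N_def by auto
  have M: "modulus t = 3 * N" by (simp add: modulus_def N_def)
  have chiN: "\<And>x. chi t x = sN N x * c3 N x" using chi_sc[OF assms(1)] N_def by simp
  have Nm3: "N mod 3 = (if even t then 2 else 1)" unfolding N_def pow2_mod3 by simp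
  have a1: "(N-1) mod N = N - 1" using N8 by (intro mod_pos_pos_trivial) auto
  have "(3*N-1) mod N = ((N-1) + 2*N) mod N" by (simp add: algebra_simps)
  also have "\<dots> = (N - 1) mod N" by (rule mod_mult_self1)
  finally have a2: "(3*N-1) mod N = N - 1" using a1 by simp
  have "(2*N-1) mod N = ((N-1) + N) mod N" by (simp add: algebra_simps)
  also have "\<dots> = (N - 1) mod N" by (rule mod_add_self2)
  finally have a3: "(2*N-1) mod N = N - 1" using a1 by simp
  have b1: "(N+1) mod N = 1" "(2*N+1) mod N = 1" "1 mod N = (1::int)" using N8 by auto
  have r1e: "r1 t = (if even t then N - 1 else N + 1)" by (simp add: r1_def N_def)
  have r2e: "r2 t = (if even t then 2*N + 1 else 2*N - 1)" by (simp add: r2_def N_def power_add)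
  have P12: "p mod N = 1 \<and> p mod 3 = 1 \<or> p mod N = N - 1 \<and> p mod 3 = 2"
    if "p \<in> P1 t \<union> P2 t"
  proof -
    have "p mod (3*N) = 1 mod (3*N) \<or> p mod (3*N) = (3*N - 1) mod (3*N)"
      using that unfolding P1_def P2_def M by auto
    then have h: "p mod N = 1 mod N \<and> p mod 3 = 1 mod 3 \<or> p mod N = (3*N-1) mod N \<and> p mod 3 = (3*N-1) mod 3"
      unfolding crt3[OF cop] .
    have c: "(3*N-1) mod 3 = (2::int)" by presburger
    show ?thesis using h unfolding c a2 b1(3) by simp
  qed
  have P34: "p mod N = 1 \<and> p mod 3 = 2 \<or> p mod N = N - 1 \<and> p mod 3 = 1"
    if "p \<in> P3 t \<union> P4 t"
  proof -
    have "p mod N = r1 t mod N \<and> p mod 3 = r1 t mod 3 \<or> p mod N = r2 t mod N \<and> p mod 3 = r2 t mod 3"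
      using that unfolding P3_def P4_def M crt3[OF cop] by auto
    moreover have "r1 t mod N = (if even t then N - 1 else 1)" "r2 t mod N = (if even t then 1 else N - 1)"
      unfolding r1e r2e using a1 a3 b1 by auto
    moreover have "r1 t mod 3 = (if even t then 1 else 2)" "r2 t mod 3 = (if even t then 2 else 1)"
      unfolding r1e r2e using Nm3 by presburger+
    ultimately show ?thesis by (cases "even t") auto
  qed

  show ?thesis
  proof (cases "p \<in> P1 t \<union> P2 t")
    case True
    then show ?thesis using P12[OF True] chiN sN_pos sN_neg[OF N8] c3_pos c3_neg[OF N3] by auto
  next
    case False
    then have "p \<in> P3 t \<union> P4 t" using assms(2) by auto
    then show ?thesis using False P34 chiN sN_pos sN_neg[OF N8] c3_pos c3_neg[OF N3] by auto
  qed
qed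

end
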